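(* Fix a frequency $\omega$ and let $\hat{\mathbf S}(\omega)$ be the multi-taper periodogram. Then for every pair $q,r\in\{1,\dots,p\}$ and every $\delta\in\bigl(0,\,80\max_{q'}S_{q'q'}(\omega)\bigr)$, $$\mathbb P\bigl\{|\hat S_{qr}(\omega)-S_{qr}(\omega)|\ge\delta\bigr\}\le 8\exp\Bigl\{-\frac{m\,\delta^2}{2^9\,5^2\,\max_{q'}\{S_{q'q'}(\omega)\}^2}\Bigr\}.$$
   Context: Let $\mathbf N(t)=(N_1(t),\dots,N_p(t))'$, $t\in(0,T]$, be a $p$-variate second-order stationary point process whose spectral density matrix at frequency $\omega$ is $\mathbf S(\omega)\in\mathbb C^{p\times p}$ (Hermitian positive definite). Fix an integer $m\ge1$ and non-overlapping tapers $h_k(z)=(m/(2\pi T))^{1/2}$ for $z\in((k-1)/m,k/m]$ and $h_k(z)=0$ otherwise ($k=1,\dots,m$, $z\in(0,1]$). Define $d_{k,q}(\omega)=\int_0^T h_k(t/T)e^{-i\omega t}\,dN_q(t)$, $H_k(\omega)=\int_0^1 h_k(z)e^{-i\omega z}dz$, the mean-corrected coefficient $\bar d_{k,q}(\omega)=d_{k,q}(\omega)-d_{k,q}(0)H_k(T\omega)/H_k(0)$, $\bar{\mathbf d}_k(\omega)=(\bar d_{k,1}(\omega),\dots,\bar d_{k,p}(\omega))'$, and the multi-taper periodogram $\hat{\mathbf S}(\omega)=m^{-1}\sum_{k=1}^m\bar{\mathbf d}_k(\omega)\bar{\mathbf d}_k(\omega)^H$. The statement is asymptotic as $T\to\infty$: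 precisely, it is understood under the limiting distributional model in which $\bar{\mathbf d}_1(\omega),\dots,\bar{\mathbf d}_m(\omega)$ are i.i.d. circularly symmetric complex Gaussian $\mathcal N_C(0,\mathbf S(\omega))$, i.e. $(\operatorname{Re}\bar{\mathbf d}_k,\operatorname{Im}\bar{\mathbf d}_k)$ is real Gaussian in $\mathbb R^{2p}$ with mean $0$ and covariance $\tfrac12\begin{pmatrix}\operatorname{Re}\mathbf S&-\operatorname{Im}\mathbf S\\ \operatorname{Im}\mathbf S&\operatorname{Re}\mathbf S\end{pmatrix}$. *)

theory Defs
  imports "HOL-Probability.Probability"
begin

definition herm_quad :: "complex^'p^'p \<Rightarrow> complex^'p \<Rightarrow> complex" where
  "herm_quad S c = (\<Sum>i\<in>UNIV. \<Sum>j\<in>UNIV. cnj (c$i) * S$i$j * c$j)"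

definition hermitian_pd :: "complex^'p^'p \<Rightarrow> bool" where
  "hermitian_pd S \<longleftrightarrow> (\<forall>i j. S$i$j = cnj (S$j$i)) \<and> (\<forall>c. c \<noteq> 0 \<longrightarrow> Re (herm_quad S c) > 0)"

text \<open>X is circularly symmetric complex Gaussian N_C(0,S): (Re X, Im X) is a real
  Gaussian vector with mean 0 and covariance 1/2 [[Re S, -Im S],[Im S, Re S]],
  expressed (Cramer-Wold) by: every nonzero real linear functional
  Re(c^H X) = Re c . Re X + Im c . Im X is normal with mean 0 and variance
  Re(c^H S c)/2.\<close>
definition circ_complex_gaussian :: "'a measure \<Rightarrow> ('a \<Rightarrow> complex^'p) \<Rightarrow> complex^'p^'p \<Rightarrow> bool" where
  "circ_complex_gaussian M X S \<longleftrightarrow> X \<in> borel_measurable M \<and>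
     (\<forall>c. c \<noteq> 0 \<longrightarrow>
        distributed M lborel (\<lambda>x. Re (\<Sum>j\<in>UNIV. cnj (c$j) * X x $ j))
          (normal_density 0 (sqrt (Re (herm_quad S c) / 2))))"

definition multitaper :: "nat \<Rightarrow> (nat \<Rightarrow> complex^'p) \<Rightarrow> complex^'p^'p" where
  "multitaper m d = (\<chi> q r. (\<Sum>k=1..m. d k $ q * cnj (d k $ r)) / of_nat m)"

end

theory Submission imports Defs begin

lemma nd_shift:
  fixes s \<theta> y :: real
  assumes s: "s > 0" and a: "1 - 2*\<theta>* s\<^sup>2 > 0"
  shows "normal_density 0 s y * exp (\<theta> * y\<^sup>2) =
     (1 / sqrt (1 - 2*\<theta>* s\<^sup>2)) * normal_density 0 (s / sqrt (1 - 2*\<theta>* s\<^sup>2)) y"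
proof -
  define a where "a = 1 - 2*\<theta>* s\<^sup>2"
  have a0: "a > 0" using a a_def by simp
  have sq: "(s / sqrt a)\<^sup>2 = s\<^sup>2 / a" using a0 by (simp add: power_divide)
  have e: "exp (-(y - 0)\<^sup>2 / (2 * s\<^sup>2)) * exp (\<theta> * y\<^sup>2) = exp (-(y-0)\<^sup>2 / (2 * (s\<^sup>2/a)))"
    unfolding exp_add[symmetric] using s a0 by (simp add: a_def field_simps)
  have r: "sqrt (2 * pi * (s\<^sup>2 / a)) = sqrt (2*pi* s\<^sup>2) / sqrt a"
    using a0 by (simp add: real_sqrt_divide)
  have "normal_density 0 s y * exp (\<theta> * y\<^sup>2) = 1 / sqrt (2 * pi * s\<^sup>2) * (exp (-(y - 0)\<^sup>2 / (2 * s\<^sup>2)) * exp (\<theta> * y\<^sup>2))"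
    unfolding normal_density_def by simp
  also have "\<dots> = 1 / sqrt (2 * pi * s\<^sup>2) * exp (-(y-0)\<^sup>2 / (2 * (s\<^sup>2/a)))" by (simp only: e)
  also have "\<dots> = (1 / sqrt a) * (1 / sqrt (2 * pi * (s / sqrt a)\<^sup>2) * exp (-(y-0)\<^sup>2 / (2 * (s / sqrt a)\<^sup>2)))"
    unfolding sq r using a0 by simp
  finally show ?thesis unfolding a_def normal_density_def .
qed

lemma nn_nd: "\<sigma> > 0 \<Longrightarrow> (\<integral>\<^sup>+x. ennreal (normal_density \<mu> \<sigma> x) \<partial>lborel) = 1"
  by (subst nn_integral_eq_integral) (auto simp: integrable_normal_density integral_normal_density)

lemma mgf_sq:
  assumes "distributed M lborel X (normal_density 0 s)" "s > 0" "2*\<theta>* s\<^sup>2 < 1"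
  shows "(\<integral>\<^sup>+x. ennreal (exp (\<theta> * (X x)\<^sup>2)) \<partial>M) = ennreal (1 / sqrt (1 - 2*\<theta>* s\<^sup>2))"
proof -
  have "(\<integral>\<^sup>+x. ennreal (exp (\<theta> * (X x)\<^sup>2)) \<partial>M) =
     (\<integral>\<^sup>+y. ennreal (normal_density 0 s y) * ennreal (exp (\<theta> * y\<^sup>2)) \<partial>lborel)"
    by (rule distributed_nn_integral[OF assms(1), symmetric]) simp
  also have "\<dots> = (\<integral>\<^sup>+y. ennreal (1 / sqrt (1 - 2*\<theta>* s\<^sup>2)) * ennreal (normal_density 0 (s / sqrt (1 - 2*\<theta>* s\<^sup>2)) y) \<partial>lborel)"
    using nd_shift[of s \<theta>] assms(2,3)
    by (intro nn_integral_cong) (simp add: ennreal_mult[symmetric])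
  also have "\<dots> = ennreal (1 / sqrt (1 - 2*\<theta>* s\<^sup>2))"
    using assms(2,3) by (subst nn_integral_cmult) (simp_all add: nn_nd)
  finally show ?thesis .
qed

lemma exp_sqrt_bound:
  fixes u :: real
  assumes "\<bar>u\<bar> \<le> 1/4"
  shows "exp (-u) * (1 / sqrt (1 - 2*u)) \<le> exp (4 * u\<^sup>2)"
proof -
  have "\<bar>ln (1 + (-2*u)) - (-2*u)\<bar> \<le> 2 * (-2*u)\<^sup>2"
    by (rule abs_ln_one_plus_x_minus_x_bound) (use assms in simp)
  hence l: "ln (1 - 2*u) \<ge> -2*u - 8*u\<^sup>2" by (simp add: power2_eq_square)
  have p: "1 - 2*u > 0" using assms by simp
  have "sqrt (1 - 2*u) = exp (ln (1 - 2*u) / 2)"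
    using p by (simp add: sqrt_def root_powr_inverse powr_def)
  also have "\<dots> \<ge> exp (-u - 4*u\<^sup>2)" using l by simp
  finally have "sqrt (1 - 2*u) \<ge> exp (-u - 4*u\<^sup>2)" .
  hence "1 / sqrt (1 - 2*u) \<le> 1 / exp (-u - 4*u\<^sup>2)"
    using p by (intro divide_left_mono) (auto intro!: mult_pos_pos)
  hence "exp (-u) * (1 / sqrt (1 - 2*u)) \<le> exp (-u) * (1 / exp (-u - 4*u\<^sup>2))"
    by (intro mult_left_mono) auto
  also have "\<dots> = exp (4 * u\<^sup>2)" by (simp add: exp_diff exp_minus field_simps)
  finally show ?thesis .
qed

lemma gauss_sq_bound:
  assumes P: "prob_space M"
  and G: "(v = 0 \<and> (\<forall>x\<in>space M. G x = 0)) \<or> (v > 0 \<and> distributed M lborel G (normal_density 0 (sqrt v)))"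
  and th: "\<bar>\<theta>\<bar> * v \<le> 1/4"
  shows "(\<integral>\<^sup>+x. ennreal (exp (\<theta> * ((G x)\<^sup>2 - v))) \<partial>M) \<le> ennreal (exp (4 * \<theta>\<^sup>2 * v\<^sup>2))"
proof -
  interpret prob_space M by (rule P)
  from G show ?thesis
  proof
    assume a: "v = 0 \<and> (\<forall>x\<in>space M. G x = 0)"
    have "(\<integral>\<^sup>+x. ennreal (exp (\<theta> * ((G x)\<^sup>2 - v))) \<partial>M) = (\<integral>\<^sup>+x. 1 \<partial>M)"
      using a by (intro nn_integral_cong) simp
    also have "\<dots> = 1" by (simp add: emeasure_space_1)
    finally show ?thesis using a by simp
  next
    assume a: "v > 0 \<and> distributed M lborel G (normal_density 0 (sqrt v))"
    have sv: "(sqrt v)\<^sup>2 = v" using a by simp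
    have vpos: "v \<ge> 0" using a by simp
    have ab: "\<bar>\<theta> * v\<bar> \<le> 1/4" using th vpos by (simp add: abs_mult)
    have Gm[measurable]: "G \<in> borel_measurable M"
      using distributed_measurable[OF conjunct2[OF a]] by simp
    have "(\<integral>\<^sup>+x. ennreal (exp (\<theta> * ((G x)\<^sup>2 - v))) \<partial>M)
        = (\<integral>\<^sup>+x. ennreal (exp (-(\<theta>* v))) * ennreal (exp (\<theta> * (G x)\<^sup>2)) \<partial>M)"
      by (intro nn_integral_cong) (simp add: ennreal_mult[symmetric] exp_add[symmetric] algebra_simps)
    also have "\<dots> = ennreal (exp (-(\<theta>* v))) * (\<integral>\<^sup>+x. ennreal (exp (\<theta> * (G x)\<^sup>2)) \<partial>M)"
      by (rule nn_integral_cmult) simp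
    also have "(\<integral>\<^sup>+x. ennreal (exp (\<theta> * (G x)\<^sup>2)) \<partial>M) = ennreal (1 / sqrt (1 - 2*(\<theta>* v)))"
      using mgf_sq[OF conjunct2[OF a], of \<theta>] a ab sv by (simp add: mult.assoc)
    also have "ennreal (exp (-(\<theta>* v))) * ennreal (1 / sqrt (1 - 2*(\<theta>* v))) = ennreal (exp (-(\<theta>* v)) * (1 / sqrt (1 - 2*(\<theta>* v))))"
      using ab by (simp add: ennreal_mult[symmetric])
    also have "\<dots> \<le> ennreal (exp (4 * (\<theta>* v)\<^sup>2))"
      by (intro ennreal_leI exp_sqrt_bound ab)
    finally show ?thesis by (simp add: power_mult_distrib mult.assoc)
  qed
qed

lemma vec_nth_meas[measurable]: "(\<lambda>v::'b::topological_space^'p. v $ j) \<in> borel_measurable borel"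
  by (intro borel_measurable_continuous_onI continuous_intros)

definition Lf :: "complex^'p \<Rightarrow> complex^'p \<Rightarrow> complex" where
  "Lf c x = (\<Sum>j\<in>UNIV. cnj (c$j) * x$j)"

definition Bf :: "complex^'p^'p \<Rightarrow> complex^'p \<Rightarrow> complex^'p \<Rightarrow> complex" where
  "Bf S a b = (\<Sum>i\<in>UNIV. \<Sum>j\<in>UNIV. cnj (a$i) * S$i$j * b$j)"

definition ivec :: "complex^'p \<Rightarrow> complex^'p" where
  "ivec c = (\<chi> j. \<i> * c$j)"

lemma hq_add: "herm_quad S (a + b) = herm_quad S a + herm_quad S b + Bf S a b + Bf S b a"
  unfolding herm_quad_def Bf_def
  by (simp add: sum.distrib[symmetric] algebra_simps)

lemma hq_diff: "herm_quad S (a - b) = herm_quad S a + herm_quad S b - Bf S a b - Bf S b a"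
  unfolding herm_quad_def Bf_def
  by (simp add: sum.distrib[symmetric] sum_subtractf[symmetric] algebra_simps)

lemma hq_ivec: "herm_quad S (ivec c) = herm_quad S c"
  unfolding herm_quad_def ivec_def
  by (intro sum.cong refl) (simp add: algebra_simps)

lemma hq_zero: "herm_quad S 0 = 0"
  unfolding herm_quad_def by simp

lemma ivec_zero: "ivec c = 0 \<longleftrightarrow> c = 0"
  unfolding ivec_def by (auto simp: vec_eq_iff)

lemma Lf_add: "Lf (a + b) x = Lf a x + Lf b x"
  unfolding Lf_def by (simp add: sum.distrib[symmetric] algebra_simps)

lemma Lf_diff: "Lf (a - b) x = Lf a x - Lf b x"
  unfolding Lf_def by (simp add: sum_subtractf[symmetric] algebra_simps)

lemma Lf_ivec: "Re (Lf (ivec c) x) = Im (Lf c x)"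
proof -
  have "Lf (ivec c) x = - \<i> * Lf c x"
    unfolding Lf_def ivec_def by (simp add: sum_distrib_left algebra_simps)
  thus ?thesis by simp
qed

lemma ifm: "(if P then a else 0) * (b::complex) = (if P then a * b else 0)" by simp
lemma ifm2: "b * (if P then a else 0) = (if P then b * a else (0::complex))" by simp
lemma cnj_if: "cnj (if P then a else 0) = (if P then cnj a else 0)" by simp

lemma Lf_axis: "Lf (axis q a) x = cnj a * x$q"
  unfolding Lf_def axis_def by (simp add: cnj_if ifm ifm2 sum.delta)

lemma Bf_axis: "Bf S (axis q a) (axis r b) = cnj a * S$q$r * b"
  unfolding Bf_def axis_def by (simp add: cnj_if ifm ifm2 sum.delta)

lemma hq_axis: "herm_quad S (axis q a) = cnj a * S$q$q * a"
  unfolding herm_quad_def axis_def by (simp add: cnj_if ifm ifm2 sum.delta)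

lemma exp_avg2: "exp ((a + b) / 2) \<le> (exp a + exp b) / (2::real)"
proof -
  have ea: "exp a = (exp (a/2))\<^sup>2" by (simp add: power2_eq_square exp_add[symmetric])
  have eb: "exp b = (exp (b/2))\<^sup>2" by (simp add: power2_eq_square exp_add[symmetric])
  have eab: "exp ((a + b) / 2) = exp (a/2) * exp (b/2)" by (simp add: exp_add[symmetric] add_divide_distrib)
  have "0 \<le> (exp (a/2) - exp (b/2))\<^sup>2" by simp
  hence "0 \<le> (exp (a/2))\<^sup>2 + (exp (b/2))\<^sup>2 - 2 * exp (a/2) * exp (b/2)"
    by (simp only: power2_diff)
  hence "2 * (exp (a/2) * exp (b/2)) \<le> (exp (a/2))\<^sup>2 + (exp (b/2))\<^sup>2" by linarith
  thus ?thesis unfolding ea eb eab by (simp add: le_divide_eq mult.commute)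
qed

lemma exp_avg4: "exp ((a + b + c + d) / 4) \<le> (exp a + exp b + exp c + exp d) / (4::real)"
proof -
  have "exp ((a + b + c + d) / 4) = exp (((a+b)/2 + (c+d)/2) / 2)" by (simp add: field_simps)
  also have "\<dots> \<le> (exp ((a+b)/2) + exp ((c+d)/2)) / 2" by (rule exp_avg2)
  also have "\<dots> \<le> ((exp a + exp b)/2 + (exp c + exp d)/2) / 2"
    by (intro divide_right_mono add_mono exp_avg2) simp_all
  also have "\<dots> = (exp a + exp b + exp c + exp d) / 4" by (simp add: field_simps)
  finally show ?thesis .
qed

lemma gauss_of:
  assumes G: "circ_complex_gaussian M X S" and H: "hermitian_pd S"
  shows "(Re (herm_quad S c) / 2 = 0 \<and> (\<forall>x\<in>space M. Re (Lf c (X x)) = 0)) \<or>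
         (Re (herm_quad S c) / 2 > 0 \<and> distributed M lborel (\<lambda>x. Re (Lf c (X x))) (normal_density 0 (sqrt (Re (herm_quad S c) / 2))))"
proof (cases "c = 0")
  case True
  thus ?thesis by (simp add: hq_zero Lf_def)
next
  case False
  hence "Re (herm_quad S c) > 0" using H unfolding hermitian_pd_def by blast
  moreover have "distributed M lborel (\<lambda>x. Re (Lf c (X x))) (normal_density 0 (sqrt (Re (herm_quad S c) / 2)))"
    using G False unfolding circ_complex_gaussian_def Lf_def by blast
  ultimately show ?thesis by simp
qed

lemma hq_nonneg: "hermitian_pd S \<Longrightarrow> Re (herm_quad S c) \<ge> 0"
  unfolding hermitian_pd_def by (cases "c = 0") (auto simp: hq_zero intro: less_imp_le)

lemma term_bound:
  assumes P: "prob_space M"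
  and G: "(v = 0 \<and> (\<forall>x\<in>space M. G x = 0)) \<or> (v > 0 \<and> distributed M lborel G (normal_density 0 (sqrt v)))"
  and v: "0 \<le> v" "v \<le> 2 * \<sigma>" and th: "8 * \<bar>\<theta>\<bar> * \<sigma> \<le> 1"
  shows "(\<integral>\<^sup>+x. ennreal (exp (\<theta> * ((G x)\<^sup>2 - v))) \<partial>M) \<le> ennreal (exp (16 * \<theta>\<^sup>2 * \<sigma>\<^sup>2))"
proof -
  have "\<bar>\<theta>\<bar> * v \<le> \<bar>\<theta>\<bar> * (2 * \<sigma>)" using v by (intro mult_left_mono) auto
  hence t: "\<bar>\<theta>\<bar> * v \<le> 1/4" using th by simp
  have "v\<^sup>2 \<le> (2 * \<sigma>)\<^sup>2" using v by (intro power_mono) auto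
  hence "4 * \<theta>\<^sup>2 * v\<^sup>2 \<le> 4 * \<theta>\<^sup>2 * (2*\<sigma>)\<^sup>2" by (intro mult_left_mono) auto
  hence e: "exp (4 * \<theta>\<^sup>2 * v\<^sup>2) \<le> exp (16 * \<theta>\<^sup>2 * \<sigma>\<^sup>2)" by (simp add: power_mult_distrib)
  show ?thesis
    by (rule order.trans[OF gauss_sq_bound[OF P G t]]) (rule ennreal_leI[OF e])
qed

lemma per_k:
  fixes S :: "complex^'p^'p" and X :: "'a \<Rightarrow> complex^'p"
  assumes P: "prob_space M" and G: "circ_complex_gaussian M X S" and H: "hermitian_pd S"
    and w: "cmod w = 1" and sq: "Re (S$q$q) \<le> \<sigma>" and sr: "Re (S$r$r) \<le> \<sigma>"
    and l: "8 * \<bar>lam\<bar> * \<sigma> \<le> 1"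
  shows "(\<integral>\<^sup>+x. ennreal (exp (lam * (Re (w * (X x $ q * cnj (X x $ r))) - Re (w * S$q$r)))) \<partial>M)
           \<le> ennreal (exp (16 * lam\<^sup>2 * \<sigma>\<^sup>2))"
proof -
  interpret prob_space M by (rule P)
  have Xm[measurable]: "X \<in> borel_measurable M" using G unfolding circ_complex_gaussian_def by blast
  define a where "a = axis q (cnj w)"
  define b where "b = (axis r 1 :: complex^'p)"
  define cp where "cp = a + b"
  define cm where "cm = a - b"
  define vp where "vp = Re (herm_quad S cp) / 2"
  define vm where "vm = Re (herm_quad S cm) / 2"
  define E where "E = ennreal (exp (16 * lam\<^sup>2 * \<sigma>\<^sup>2))"
  have ww: "cnj w * w = 1"
    using complex_norm_square[of w] w by (simp add: mult.commute)
  have herm: "S$r$q = cnj (S$q$r)" using H unfolding hermitian_pd_def by blast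
  have vp0: "vp \<ge> 0" unfolding vp_def using hq_nonneg[OF H] by simp
  have vm0: "vm \<ge> 0" unfolding vm_def using hq_nonneg[OF H] by simp
  have hqa: "Re (herm_quad S a) = Re (S$q$q)"
  proof -
    have "herm_quad S a = S$q$q * (cnj w * w)" unfolding a_def hq_axis by (simp add: ac_simps)
    thus ?thesis using ww by simp
  qed
  have hqb: "Re (herm_quad S b) = Re (S$r$r)"
    unfolding b_def hq_axis by simp
  have "vp + vm = Re (herm_quad S a) + Re (herm_quad S b)"
    unfolding vp_def vm_def cp_def cm_def hq_add hq_diff by (simp add: field_simps)
  hence vsum: "vp + vm \<le> 2 * \<sigma>" using hqa hqb sq sr by simp
  have vpb: "vp \<le> 2 * \<sigma>" and vmb: "vm \<le> 2 * \<sigma>" using vsum vp0 vm0 by auto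
  have "vp - vm = Re (Bf S a b + Bf S b a)"
    unfolding vp_def vm_def cp_def cm_def hq_add hq_diff by (simp add: field_simps)
  also have "\<dots> = Re (w * S$q$r) + Re (S$r$q * cnj w)"
    unfolding a_def b_def Bf_axis by simp
  also have "\<dots> = 2 * Re (w * S$q$r)" unfolding herm by simp
  finally have mu: "Re (w * S$q$r) = (vp - vm) / 2" by simp
  have Lp: "Lf cp y = w * y$q + y$r" for y
    unfolding cp_def a_def b_def Lf_add Lf_axis by simp
  have Lm: "Lf cm y = w * y$q - y$r" for y
    unfolding cm_def a_def b_def Lf_diff Lf_axis by simp
  have Y: "Re (w * (y $ q * cnj (y $ r))) =
     ((Re (Lf cp y))\<^sup>2 + (Re (Lf (ivec cp) y))\<^sup>2 - (Re (Lf cm y))\<^sup>2 - (Re (Lf (ivec cm) y))\<^sup>2) / 4" for y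
    unfolding Lf_ivec Lp Lm by (simp add: power2_eq_square algebra_simps)
  define b1 where "b1 y = lam * ((Re (Lf cp y))\<^sup>2 - vp)" for y
  define b2 where "b2 y = lam * ((Re (Lf (ivec cp) y))\<^sup>2 - vp)" for y
  define b3 where "b3 y = (-lam) * ((Re (Lf cm y))\<^sup>2 - vm)" for y
  define b4 where "b4 y = (-lam) * ((Re (Lf (ivec cm) y))\<^sup>2 - vm)" for y
  have pt: "ennreal (exp (lam * (Re (w * (y $ q * cnj (y $ r))) - Re (w * S$q$r))))
     \<le> ennreal (1/4) * (ennreal (exp (b1 y)) + ennreal (exp (b2 y)) + ennreal (exp (b3 y)) + ennreal (exp (b4 y)))" for y
  proof -
    have "lam * (Re (w * (y $ q * cnj (y $ r))) - Re (w * S$q$r)) = (b1 y + b2 y + b3 y + b4 y) / 4"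
      unfolding Y mu b1_def b2_def b3_def b4_def by (simp add: field_simps)
    hence "exp (lam * (Re (w * (y $ q * cnj (y $ r))) - Re (w * S$q$r))) = exp ((b1 y + b2 y + b3 y + b4 y) / 4)"
      by (simp only:)
    also have "\<dots> \<le> (1/4) * (exp (b1 y) + exp (b2 y) + exp (b3 y) + exp (b4 y))"
      using exp_avg4[of "b1 y" "b2 y" "b3 y" "b4 y"] by simp
    finally have "exp (lam * (Re (w * (y $ q * cnj (y $ r))) - Re (w * S$q$r))) \<le> (1/4) * (exp (b1 y) + exp (b2 y) + exp (b3 y) + exp (b4 y))" .
    hence "ennreal (exp (lam * (Re (w * (y $ q * cnj (y $ r))) - Re (w * S$q$r)))) \<le> ennreal ((1/4) * (exp (b1 y) + exp (b2 y) + exp (b3 y) + exp (b4 y)))"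
      by (rule ennreal_leI)
    also have "\<dots> = ennreal (1/4) * (ennreal (exp (b1 y)) + ennreal (exp (b2 y)) + ennreal (exp (b3 y)) + ennreal (exp (b4 y)))"
    proof -
      have e: "ennreal (exp (b1 y)) + ennreal (exp (b2 y)) + ennreal (exp (b3 y)) + ennreal (exp (b4 y))
          = ennreal (exp (b1 y) + exp (b2 y) + exp (b3 y) + exp (b4 y))" by simp
      show ?thesis unfolding e by (rule ennreal_mult) auto
    qed
    finally show ?thesis .
  qed
  have l1: "8 * \<bar>-lam\<bar> * \<sigma> \<le> 1" using l by simp
  have gp: "(vp = 0 \<and> (\<forall>x\<in>space M. Re (Lf cp (X x)) = 0)) \<or> (vp > 0 \<and> distributed M lborel (\<lambda>x. Re (Lf cp (X x))) (normal_density 0 (sqrt vp)))"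
    unfolding vp_def by (rule gauss_of[OF G H])
  have gpi: "(vp = 0 \<and> (\<forall>x\<in>space M. Re (Lf (ivec cp) (X x)) = 0)) \<or> (vp > 0 \<and> distributed M lborel (\<lambda>x. Re (Lf (ivec cp) (X x))) (normal_density 0 (sqrt vp)))"
    unfolding vp_def using gauss_of[OF G H, of "ivec cp"] by (simp add: hq_ivec)
  have gm: "(vm = 0 \<and> (\<forall>x\<in>space M. Re (Lf cm (X x)) = 0)) \<or> (vm > 0 \<and> distributed M lborel (\<lambda>x. Re (Lf cm (X x))) (normal_density 0 (sqrt vm)))"
    unfolding vm_def by (rule gauss_of[OF G H])
  have gmi: "(vm = 0 \<and> (\<forall>x\<in>space M. Re (Lf (ivec cm) (X x)) = 0)) \<or> (vm > 0 \<and> distributed M lborel (\<lambda>x. Re (Lf (ivec cm) (X x))) (normal_density 0 (sqrt vm)))"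
    unfolding vm_def using gauss_of[OF G H, of "ivec cm"] by (simp add: hq_ivec)
  have i1: "(\<integral>\<^sup>+x. ennreal (exp (b1 (X x))) \<partial>M) \<le> E"
    unfolding b1_def E_def by (rule term_bound[OF P gp vp0 vpb l])
  have i2: "(\<integral>\<^sup>+x. ennreal (exp (b2 (X x))) \<partial>M) \<le> E"
    unfolding b2_def E_def by (rule term_bound[OF P gpi vp0 vpb l])
  have i3: "(\<integral>\<^sup>+x. ennreal (exp (b3 (X x))) \<partial>M) \<le> E"
    unfolding b3_def E_def using term_bound[OF P gm vm0 vmb l1] by simp
  have i4: "(\<integral>\<^sup>+x. ennreal (exp (b4 (X x))) \<partial>M) \<le> E"
    unfolding b4_def E_def using term_bound[OF P gmi vm0 vmb l1] by simp
  have m1[measurable]: "(\<lambda>x. b1 (X x)) \<in> borel_measurable M"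
    unfolding b1_def Lf_def by measurable
  have m2[measurable]: "(\<lambda>x. b2 (X x)) \<in> borel_measurable M"
    unfolding b2_def Lf_def by measurable
  have m3[measurable]: "(\<lambda>x. b3 (X x)) \<in> borel_measurable M"
    unfolding b3_def Lf_def by measurable
  have m4[measurable]: "(\<lambda>x. b4 (X x)) \<in> borel_measurable M"
    unfolding b4_def Lf_def by measurable
  have "(\<integral>\<^sup>+x. ennreal (exp (lam * (Re (w * (X x $ q * cnj (X x $ r))) - Re (w * S$q$r)))) \<partial>M)
      \<le> (\<integral>\<^sup>+x. ennreal (1/4) * (ennreal (exp (b1 (X x))) + ennreal (exp (b2 (X x))) + ennreal (exp (b3 (X x))) + ennreal (exp (b4 (X x)))) \<partial>M)"
    by (intro nn_integral_mono pt)
  also have "\<dots> = ennreal (1/4) * ((\<integral>\<^sup>+x. ennreal (exp (b1 (X x))) \<partial>M) + (\<integral>\<^sup>+x. ennreal (exp (b2 (X x))) \<partial>M)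
       + (\<integral>\<^sup>+x. ennreal (exp (b3 (X x))) \<partial>M) + (\<integral>\<^sup>+x. ennreal (exp (b4 (X x))) \<partial>M))"
    apply (subst nn_integral_cmult, measurable)
    apply (subst nn_integral_add, measurable)+
    done
  also have "\<dots> \<le> ennreal (1/4) * (E + E + E + E)"
    by (intro mult_left_mono add_mono i1 i2 i3 i4) simp
  also have "\<dots> = E"
    unfolding E_def by (simp add: ennreal_mult[symmetric] ennreal_plus[symmetric] del: ennreal_plus)
  finally show ?thesis unfolding E_def .
qed

definition Yf :: "complex \<Rightarrow> 'p \<Rightarrow> 'p \<Rightarrow> complex^'p^'p \<Rightarrow> complex^'p \<Rightarrow> real" where
  "Yf w q r S v = Re (w * (v $ q * cnj (v $ r))) - Re (w * S$q$r)"

lemma dir_bound: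
  fixes S :: "complex^'p^'p" and d :: "nat \<Rightarrow> 'a \<Rightarrow> complex^'p"
  assumes P: "prob_space M" and indep: "prob_space.indep_vars M (\<lambda>_. borel) d {1..m}"
    and G: "\<forall>k\<in>{1..m}. circ_complex_gaussian M (d k) S" and H: "hermitian_pd S"
    and w: "cmod w = 1" and sq: "Re (S$q$q) \<le> \<sigma>" and sr: "Re (S$r$r) \<le> \<sigma>"
    and l: "8 * \<bar>lam\<bar> * \<sigma> \<le> 1" and lpos: "lam > 0"
  shows "measure M {x\<in>space M. (\<Sum>k\<in>{1..m}. Yf w q r S (d k x)) \<ge> a}
           \<le> exp (-lam * a + real m * (16 * lam\<^sup>2 * \<sigma>\<^sup>2))"
proof -
  interpret prob_space M by (rule P)
  have Yfm[measurable]: "Yf w q r S \<in> borel_measurable borel"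
    unfolding Yf_def by (intro borel_measurable_continuous_onI continuous_intros)
  have dm: "d k \<in> borel_measurable M" if "k \<in> {1..m}" for k
    using G that unfolding circ_complex_gaussian_def by blast
  have Ym: "(\<lambda>x. Yf w q r S (d k x)) \<in> borel_measurable M" if "k \<in> {1..m}" for k
    using dm[OF that] by measurable
  have fm[measurable]: "(\<lambda>x. \<Sum>k\<in>{1..m}. Yf w q r S (d k x)) \<in> borel_measurable M"
    by (rule borel_measurable_sum) (rule Ym)
  have "emeasure M {x\<in>space M. (\<Sum>k\<in>{1..m}. Yf w q r S (d k x)) \<ge> a}
      \<le> ennreal (exp (-lam * a)) * (\<integral>\<^sup>+x. ennreal (exp (lam * (\<Sum>k\<in>{1..m}. Yf w q r S (d k x)))) * indicator (space M) x \<partial>M)"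
    by (rule Chernoff_ineq_nn_integral_ge[OF lpos]) measurable
  also have "(\<integral>\<^sup>+x. ennreal (exp (lam * (\<Sum>k\<in>{1..m}. Yf w q r S (d k x)))) * indicator (space M) x \<partial>M)
      = (\<integral>\<^sup>+x. (\<Prod>k\<in>{1..m}. ennreal (exp (lam * Yf w q r S (d k x)))) \<partial>M)"
    by (intro nn_integral_cong) (simp add: sum_distrib_left exp_sum prod_ennreal)
  also have "\<dots> = (\<Prod>k\<in>{1..m}. \<integral>\<^sup>+x. ennreal (exp (lam * Yf w q r S (d k x))) \<partial>M)"
    by (intro indep_vars_nn_integral indep_vars_compose2[OF indep]) auto
  also have "\<dots> \<le> (\<Prod>k\<in>{1..m}. ennreal (exp (16 * lam\<^sup>2 * \<sigma>\<^sup>2)))"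
  proof (intro prod_mono_ennreal)
    fix k assume k: "k \<in> {1..m}"
    show "(\<integral>\<^sup>+x. ennreal (exp (lam * Yf w q r S (d k x))) \<partial>M) \<le> ennreal (exp (16 * lam\<^sup>2 * \<sigma>\<^sup>2))"
      unfolding Yf_def using per_k[OF P _ H w sq sr l, of "d k"] G k by blast
  qed
  also have "ennreal (exp (-lam * a)) * (\<Prod>k\<in>{1..m}. ennreal (exp (16 * lam\<^sup>2 * \<sigma>\<^sup>2)))
      = ennreal (exp (-lam * a + real m * (16 * lam\<^sup>2 * \<sigma>\<^sup>2)))"
  proof -
    have "(\<Prod>k\<in>{1..m}. ennreal (exp (16 * lam\<^sup>2 * \<sigma>\<^sup>2))) = ennreal ((exp (16 * lam\<^sup>2 * \<sigma>\<^sup>2)) ^ m)"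
      by (simp add: ennreal_power)
    moreover have "ennreal (exp (-lam * a)) * ennreal ((exp (16 * lam\<^sup>2 * \<sigma>\<^sup>2)) ^ m)
        = ennreal (exp (-lam * a) * (exp (16 * lam\<^sup>2 * \<sigma>\<^sup>2)) ^ m)"
      by (rule ennreal_mult[symmetric]) auto
    moreover have "exp (-lam * a) * (exp (16 * lam\<^sup>2 * \<sigma>\<^sup>2)) ^ m = exp (-lam * a + real m * (16 * lam\<^sup>2 * \<sigma>\<^sup>2))"
      by (simp only: exp_add exp_of_nat_mult mult.commute)
    ultimately show ?thesis by simp
  qed
  finally have "emeasure M {x\<in>space M. (\<Sum>k\<in>{1..m}. Yf w q r S (d k x)) \<ge> a}
    \<le> ennreal (exp (-lam * a + real m * (16 * lam\<^sup>2 * \<sigma>\<^sup>2)))"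
    by (simp add: mult_left_mono)
  thus ?thesis
    by (simp add: emeasure_eq_measure)
qed

lemma A_meas:
  assumes G: "\<forall>k\<in>{1..m}. circ_complex_gaussian M (d k) S"
  shows "{x\<in>space M. (\<Sum>k\<in>{1..m}. Yf w q r S (d k x)) \<ge> a} \<in> sets M"
proof -
  have Yfm[measurable]: "Yf w q r S \<in> borel_measurable borel"
    unfolding Yf_def by (intro borel_measurable_continuous_onI continuous_intros)
  have dm: "d k \<in> borel_measurable M" if "k \<in> {1..m}" for k
    using G that unfolding circ_complex_gaussian_def by blast
  have Ym: "(\<lambda>x. Yf w q r S (d k x)) \<in> borel_measurable M" if "k \<in> {1..m}" for k
    using dm[OF that] by measurable
  have fm[measurable]: "(\<lambda>x. \<Sum>k\<in>{1..m}. Yf w q r S (d k x)) \<in> borel_measurable M"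
    by (rule borel_measurable_sum) (rule Ym)
  show ?thesis by measurable
qed

lemma aux_re:
  fixes T s w :: complex
  assumes "m \<ge> 1"
  shows "Re (w * T) - real m * Re (w * s) = real m * Re (w * (T / of_nat m - s))"
proof -
  have "w * (T / of_nat m - s) = (w * T) / of_nat m - w * s" by (simp add: algebra_simps)
  hence "Re (w * (T / of_nat m - s)) = Re (w * T) / real m - Re (w * s)"
    by (simp add: Re_divide_of_nat)
  thus ?thesis using assms by (simp add: field_simps)
qed

lemma sum_Yf:
  assumes "m \<ge> 1"
  shows "(\<Sum>k\<in>{1..m}. Yf w q r S (d k)) = real m * Re (w * (multitaper m d $ q $ r - S $ q $ r))"
proof -
  have mt: "multitaper m d $ q $ r = (\<Sum>k=1..m. d k $ q * cnj (d k $ r)) / of_nat m"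
    unfolding multitaper_def by simp
  have "(\<Sum>k\<in>{1..m}. Yf w q r S (d k)) = Re (w * (\<Sum>k=1..m. d k $ q * cnj (d k $ r))) - real m * Re (w * S$q$r)"
    unfolding Yf_def by (simp add: sum_subtractf sum_distrib_left)
  also have "\<dots> = real m * Re (w * (multitaper m d $ q $ r - S $ q $ r))"
    unfolding mt by (rule aux_re[OF assms])
  finally show ?thesis .
qed

theorem proposition1:
  fixes M :: "'a measure" and S :: "complex^'p^'p" and d :: "nat \<Rightarrow> 'a \<Rightarrow> complex^'p"
    and m :: nat and q r :: 'p and \<delta> :: real
  assumes "prob_space M"
    and "m \<ge> 1"
    and "hermitian_pd S"
    and "prob_space.indep_vars M (\<lambda>_. borel) d {1..m}"
    and "\<forall>k\<in>{1..m}. circ_complex_gaussian M (d k) S"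
    and "0 < \<delta>"
    and "\<delta> < 80 * (MAX q'. Re (S$q'$q'))"
  shows "measure M {x \<in> space M. cmod (multitaper m (\<lambda>k. d k x) $ q $ r - S $ q $ r) \<ge> \<delta>}
           \<le> 8 * exp (- (real m * \<delta>^2) / (2^9 * 5^2 * (MAX q'. Re (S$q'$q'))^2))"
proof -
  note P = assms(1) and m1 = assms(2) and H = assms(3) and indep = assms(4) and G = assms(5)
    and dpos = assms(6) and dlt = assms(7)
  interpret prob_space M by (rule P)
  define \<sigma> where "\<sigma> = (MAX q'. Re (S$q'$q'))"
  have sq: "Re (S$q$q) \<le> \<sigma>" and sr: "Re (S$r$r) \<le> \<sigma>"
    unfolding \<sigma>_def by (auto intro: Max_ge)
  have "Re (herm_quad S (axis q 1)) > 0"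
    using H unfolding hermitian_pd_def by (metis axis_eq_0_iff zero_neq_one)
  hence "Re (S$q$q) > 0" by (simp add: hq_axis)
  hence spos: "\<sigma> > 0" using sq by linarith
  define t where "t = \<delta> / sqrt 2"
  define lam where "lam = t / (480 * \<sigma>\<^sup>2)"
  have s2: "sqrt 2 > 4/3" by (rule real_less_rsqrt) (simp add: power2_eq_square)
  have tpos: "t > 0" unfolding t_def using dpos by simp
  have t2: "t\<^sup>2 = \<delta>\<^sup>2 / 2" unfolding t_def by (simp add: power_divide)
  have "t * sqrt 2 = \<delta>" unfolding t_def by simp
  hence "t * (4/3) < 80 * \<sigma>" using s2 tpos dlt unfolding \<sigma>_def
    by (smt (verit) mult_strict_left_mono)
  hence t60: "t < 60 * \<sigma>" by simp
  have lpos: "lam > 0" unfolding lam_def using tpos spos by simp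
  have l: "8 * \<bar>lam\<bar> * \<sigma> \<le> 1"
  proof -
    have "8 * \<bar>lam\<bar> * \<sigma> = t / (60 * \<sigma>)" using lpos spos tpos unfolding lam_def by (simp add: power2_eq_square)
    also have "\<dots> \<le> 1" using t60 spos by simp
    finally show ?thesis .
  qed
  define A where "A w = {x\<in>space M. (\<Sum>k\<in>{1..m}. Yf w q r S (d k x)) \<ge> real m * t}" for w
  define W :: "complex set" where "W = {1, -1, -\<i>, \<i>}"
  define E where "E = exp (-lam * (real m * t) + real m * (16 * lam\<^sup>2 * \<sigma>\<^sup>2))"
  have Ab: "measure M (A w) \<le> E" if "w \<in> W" for w
  proof -
    have "cmod w = 1" using that unfolding W_def by auto
    thus ?thesis unfolding A_def E_def by (rule dir_bound[OF P indep G H _ sq sr l lpos])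
  qed
  have Am: "A w \<in> sets M" for w unfolding A_def by (rule A_meas[OF G])
  have sub: "{x \<in> space M. cmod (multitaper m (\<lambda>k. d k x) $ q $ r - S $ q $ r) \<ge> \<delta>} \<subseteq> (\<Union>w\<in>W. A w)"
  proof
    fix x assume x: "x \<in> {x \<in> space M. cmod (multitaper m (\<lambda>k. d k x) $ q $ r - S $ q $ r) \<ge> \<delta>}"
    define z where "z = multitaper m (\<lambda>k. d k x) $ q $ r - S $ q $ r"
    have xs: "x \<in> space M" and zd: "cmod z \<ge> \<delta>" using x unfolding z_def by auto
    have key: "x \<in> A w \<longleftrightarrow> Re (w * z) \<ge> t" for w
    proof -
      have "(\<Sum>k\<in>{1..m}. Yf w q r S (d k x)) = real m * Re (w * z)"
        unfolding z_def using sum_Yf[OF m1, of w q r S "\<lambda>k. d k x"] by simp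
      moreover have "real m > 0" using m1 by simp
      ultimately show ?thesis unfolding A_def using xs by simp
    qed
    have "\<not> (\<bar>Re z\<bar> < t \<and> \<bar>Im z\<bar> < t)"
    proof
      assume h: "\<bar>Re z\<bar> < t \<and> \<bar>Im z\<bar> < t"
      have "\<bar>Re z\<bar>\<^sup>2 < t\<^sup>2" by (intro power_strict_mono) (use h in auto)
      moreover have "\<bar>Im z\<bar>\<^sup>2 < t\<^sup>2" by (intro power_strict_mono) (use h in auto)
      ultimately have "(Re z)\<^sup>2 < t\<^sup>2" "(Im z)\<^sup>2 < t\<^sup>2" by simp_all
      hence "(cmod z)\<^sup>2 < \<delta>\<^sup>2" unfolding cmod_power2 using t2 by simp
      moreover have "\<delta>\<^sup>2 \<le> (cmod z)\<^sup>2" by (rule power_mono[OF zd]) (use dpos in simp)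
      ultimately show False by simp
    qed
    hence "Re z \<ge> t \<or> -Re z \<ge> t \<or> Im z \<ge> t \<or> -Im z \<ge> t" by linarith
    hence "Re (1 * z) \<ge> t \<or> Re (-1 * z) \<ge> t \<or> Re (-\<i> * z) \<ge> t \<or> Re (\<i> * z) \<ge> t" by simp
    thus "x \<in> (\<Union>w\<in>W. A w)" unfolding W_def using key by auto
  qed
  have "measure M {x \<in> space M. cmod (multitaper m (\<lambda>k. d k x) $ q $ r - S $ q $ r) \<ge> \<delta>}
      \<le> measure M (\<Union>w\<in>W. A w)"
    by (rule finite_measure_mono[OF sub]) (use Am W_def in auto)
  also have "\<dots> \<le> (\<Sum>w\<in>W. measure M (A w))"
    by (rule finite_measure_subadditive_finite) (use Am W_def in auto)
  also have "\<dots> \<le> of_nat (card W) * E"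
    by (rule sum_bounded_above) (rule Ab)
  also have "\<dots> \<le> 4 * E"
  proof -
    have "card W \<le> 4" unfolding W_def by (auto simp: card_insert_if)
    moreover have "E \<ge> 0" unfolding E_def by simp
    ultimately show ?thesis by (intro mult_right_mono) auto
  qed
  also have "\<dots> \<le> 8 * exp (- (real m * \<delta>^2) / (2^9 * 5^2 * \<sigma>^2))"
  proof -
    define X where "X = real m * \<delta>\<^sup>2 / \<sigma>\<^sup>2"
    have X0: "X \<ge> 0" unfolding X_def by simp
    have "-lam * (real m * t) + real m * (16 * lam\<^sup>2 * \<sigma>\<^sup>2) = - (real m * t\<^sup>2 * 464 / (230400 * \<sigma>\<^sup>2))"
      unfolding lam_def using spos by (simp add: field_simps power2_eq_square)
    also have "\<dots> = - (X * (29 / 28800))" unfolding t2 X_def using spos by (simp add: field_simps)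
    finally have e1: "-lam * (real m * t) + real m * (16 * lam\<^sup>2 * \<sigma>\<^sup>2) = - (X * (29 / 28800))" .
    have e2: "- (real m * \<delta>^2) / (2^9 * 5^2 * \<sigma>^2) = - (X * (1/12800))" unfolding X_def by simp
    have "- (X * (29 / 28800)) \<le> - (X * (1/12800))" using X0 by (intro le_imp_neg_le mult_left_mono) auto
    hence "E \<le> exp (- (real m * \<delta>^2) / (2^9 * 5^2 * \<sigma>^2))" unfolding E_def e1 e2 by simp
    thus ?thesis using exp_gt_zero[of "- (real m * \<delta>^2) / (2^9 * 5^2 * \<sigma>^2)"] by linarith
  qed
  finally show ?thesis unfolding \<sigma>_def .
qed

end
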